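(* Let $\mathcal{O}$ be an order in $B_p$. Let $\beta_1,\beta_2,\beta_3\in\mathcal{O}^T$ be linearly independent, and let $\alpha_1,\alpha_2,\alpha_3\in\mathcal{O}$ satisfy $2\alpha_i-\mathrm{Tr}(\alpha_i)=\beta_i$ and $\mathrm{Tr}(\alpha_i)\in\{0,1\}$ for each $i$. The following are equivalent: (a) $\beta_1,\beta_2,\beta_3$ attain the successive minima of $\mathcal{O}^T$. (b) $1,\alpha_1,\alpha_2,\alpha_3$ attain the successive minima of $\mathcal{O}$, and whenever $\mathrm{Tr}(\alpha_i)=0$ for some $i\in\{1,2,3\}$, every $\gamma\in\mathcal{O}$ with $N(\gamma)=N(\alpha_i)$ that is linearly independent from $1,\alpha_1,\dots,\alpha_{i-1}$ satisfies $\mathrm{Tr}(\gamma)=0$.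
   Context: $B_p$ is the quaternion algebra over $\mathbb{Q}$ ramified exactly at the prime $p$ and $\infty$, with canonical involution $\overline{x}$, reduced norm $N(x)=x\overline{x}$, reduced trace $\mathrm{Tr}(x)=x+\overline{x}$. The Gross lattice is $\mathcal{O}^T=\{2x-\mathrm{Tr}(x):x\in\mathcal{O}\}$. Both $\mathcal{O}$ (rank 4) and $\mathcal{O}^T$ (rank 3) carry the positive definite quadratic form $N$. For a lattice $\Lambda$ of rank $k$ with positive definite quadratic form $Q$, the $i$-th successive minimum is the minimum value $D_i$ such that the $\mathbb{Z}$-module generated by $\{v\in\Lambda:Q(v)\le D_i\}$ has rank at least $i$; a list $v_1,\dots,v_k$ attains the successive minima if it is linearly independent and $Q(v_i)=D_i$ for each $i$. *)

theory Defs
  imports "HOL-Number_Theory.Number_Theory"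
begin

text \<open>Elements of the rational quaternion algebra (a,b)_Q, written
  x0 + x1 i + x2 j + x3 k with i^2 = a, j^2 = b, k = ij = -ji.\<close>
datatype quat = Quat (re: rat) (ci: rat) (cj: rat) (ck: rat)

definition qone :: quat where "qone = Quat 1 0 0 0"
definition qzero :: quat where "qzero = Quat 0 0 0 0"

definition qscalar :: "rat \<Rightarrow> quat" where "qscalar c = Quat c 0 0 0"

definition qadd :: "quat \<Rightarrow> quat \<Rightarrow> quat" where
  "qadd x y = Quat (re x + re y) (ci x + ci y) (cj x + cj y) (ck x + ck y)"

definition qsub :: "quat \<Rightarrow> quat \<Rightarrow> quat" where
  "qsub x y = Quat (re x - re y) (ci x - ci y) (cj x - cj y) (ck x - ck y)"

definition qscale :: "rat \<Rightarrow> quat \<Rightarrow> quat" where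
  "qscale c x = Quat (c * re x) (c * ci x) (c * cj x) (c * ck x)"

definition qmul :: "int \<Rightarrow> int \<Rightarrow> quat \<Rightarrow> quat \<Rightarrow> quat" where
  "qmul a b x y = Quat
     (re x * re y + of_int a * ci x * ci y + of_int b * cj x * cj y - of_int (a*b) * ck x * ck y)
     (re x * ci y + ci x * re y - of_int b * cj x * ck y + of_int b * ck x * cj y)
     (re x * cj y + cj x * re y + of_int a * ci x * ck y - of_int a * ck x * ci y)
     (re x * ck y + ck x * re y + ci x * cj y - cj x * ci y)"

definition qconj :: "quat \<Rightarrow> quat" where
  "qconj x = Quat (re x) (- ci x) (- cj x) (- ck x)"

definition qtr :: "quat \<Rightarrow> rat" where "qtr x = 2 * re x"

definition qnorm :: "int \<Rightarrow> int \<Rightarrow> quat \<Rightarrow> rat" where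
  "qnorm a b x = (re x)^2 - of_int a * (ci x)^2 - of_int b * (cj x)^2 + of_int (a*b) * (ck x)^2"

definition lincomb :: "(nat \<Rightarrow> rat) \<Rightarrow> quat list \<Rightarrow> quat" where
  "lincomb c vs = Quat (\<Sum>i<length vs. c i * re (vs!i)) (\<Sum>i<length vs. c i * ci (vs!i))
                       (\<Sum>i<length vs. c i * cj (vs!i)) (\<Sum>i<length vs. c i * ck (vs!i))"

definition lin_indep :: "quat list \<Rightarrow> bool" where
  "lin_indep vs \<longleftrightarrow> (\<forall>c. lincomb c vs = qzero \<longrightarrow> (\<forall>i<length vs. c i = 0))"

definition zspan :: "quat list \<Rightarrow> quat set" where
  "zspan vs = {lincomb (\<lambda>i. of_int (n i)) vs | n. True}"

definition is_order :: "int \<Rightarrow> int \<Rightarrow> quat set \<Rightarrow> bool" where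
  "is_order a b Ord \<longleftrightarrow> (\<exists>vs. length vs = 4 \<and> lin_indep vs \<and> Ord = zspan vs) \<and>
     qone \<in> Ord \<and> (\<forall>x\<in>Ord. \<forall>y\<in>Ord. qmul a b x y \<in> Ord)"

definition gross_map :: "quat \<Rightarrow> quat" where
  "gross_map x = qsub (qscale 2 x) (qscalar (qtr x))"

definition gross_lattice :: "quat set \<Rightarrow> quat set" where
  "gross_lattice Ord = gross_map ` Ord"

text \<open>Local Hilbert symbol (a,b)_l = 1 at a prime l: z^2 = a x^2 + b y^2 has a nontrivial
  solution in Q_l, equivalently (compactness of the primitive vectors in Z_l^3) a primitive
  solution modulo every power of l.\<close>
definition hilbert_trivial_at :: "nat \<Rightarrow> int \<Rightarrow> int \<Rightarrow> bool" where
  "hilbert_trivial_at l a b \<longleftrightarrow> (\<forall>k::nat. \<exists>x y z :: int.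
      \<not> (int l dvd x \<and> int l dvd y \<and> int l dvd z) \<and>
      [a * x^2 + b * y^2 = z^2] (mod (int l ^ k)))"

definition ramified_infty :: "int \<Rightarrow> int \<Rightarrow> bool" where
  "ramified_infty a b \<longleftrightarrow> a < 0 \<and> b < 0"

definition is_Bp :: "nat \<Rightarrow> int \<Rightarrow> int \<Rightarrow> bool" where
  "is_Bp p a b \<longleftrightarrow> a \<noteq> 0 \<and> b \<noteq> 0 \<and> ramified_infty a b \<and> \<not> hilbert_trivial_at p a b \<and>
     (\<forall>l. prime l \<and> l \<noteq> p \<longrightarrow> hilbert_trivial_at l a b)"

definition rank_ge :: "quat set \<Rightarrow> nat \<Rightarrow> bool" where
  "rank_ge S i \<longleftrightarrow> (\<exists>vs. length vs = i \<and> set vs \<subseteq> S \<and> lin_indep vs)"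

definition is_succ_min :: "(quat \<Rightarrow> rat) \<Rightarrow> quat set \<Rightarrow> nat \<Rightarrow> rat \<Rightarrow> bool" where
  "is_succ_min Q L i D \<longleftrightarrow> rank_ge {v\<in>L. Q v \<le> D} i \<and>
     (\<forall>D'. rank_ge {v\<in>L. Q v \<le> D'} i \<longrightarrow> D \<le> D')"

definition attains_succ_min :: "(quat \<Rightarrow> rat) \<Rightarrow> quat set \<Rightarrow> nat \<Rightarrow> quat list \<Rightarrow> bool" where
  "attains_succ_min Q L k vs \<longleftrightarrow> length vs = k \<and> set vs \<subseteq> L \<and> lin_indep vs \<and>
     (\<forall>i<k. is_succ_min Q L (Suc i) (Q (vs!i)))"

end

theory Submission
  imports Defs
begin


instantiation quat :: ab_group_add
begin
definition zero_quat_def: "0 = qzero"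
definition plus_quat_def: "x + y = qadd x y"
definition minus_quat_def: "x - y = qsub x y"
definition uminus_quat_def: "- x = Quat (- re x) (- ci x) (- cj x) (- ck x)"
instance
  by standard (auto simp: zero_quat_def plus_quat_def minus_quat_def uminus_quat_def
      qzero_def qadd_def qsub_def quat.expand)
end
lemma quat_eq_iff: "x = y \<longleftrightarrow> re x = re y \<and> ci x = ci y \<and> cj x = cj y \<and> ck x = ck y"
  using quat.expand by auto

lemma qcomp_simps[simp]:
  "re 0 = 0" "ci 0 = 0" "cj 0 = 0" "ck 0 = 0"
  "re (x + y) = re x + re y" "ci (x + y) = ci x + ci y" "cj (x + y) = cj x + cj y" "ck (x + y) = ck x + ck y"
  "re (x - y) = re x - re y" "ci (x - y) = ci x - ci y" "cj (x - y) = cj x - cj y" "ck (x - y) = ck x - ck y"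
  "re (- x) = - re x" "ci (- x) = - ci x" "cj (- x) = - cj x" "ck (- x) = - ck x"
  "re (qscale c x) = c * re x" "ci (qscale c x) = c * ci x" "cj (qscale c x) = c * cj x" "ck (qscale c x) = c * ck x"
  "re qone = 1" "ci qone = 0" "cj qone = 0" "ck qone = 0"
  "re (qscalar r) = r" "ci (qscalar r) = 0" "cj (qscalar r) = 0" "ck (qscalar r) = 0"
  "re qzero = 0" "ci qzero = 0" "cj qzero = 0" "ck qzero = 0"
  by (simp_all add: zero_quat_def plus_quat_def minus_quat_def uminus_quat_def
      qzero_def qadd_def qsub_def qscale_def qone_def qscalar_def)

lemma qcomp_sum[simp]:
  "re (sum f A) = (\<Sum>x\<in>A. re (f x))" "ci (sum f A) = (\<Sum>x\<in>A. ci (f x))"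
  "cj (sum f A) = (\<Sum>x\<in>A. cj (f x))" "ck (sum f A) = (\<Sum>x\<in>A. ck (f x))"
  by (induct A rule: infinite_finite_induct, auto)+

lemma qzero_eq: "qzero = 0" by (simp add: zero_quat_def)

interpretation qv: vector_space qscale
  by unfold_locales (auto simp: quat_eq_iff algebra_simps)

lemma lincomb_sum: "lincomb c vs = (\<Sum>i<length vs. qscale (c i) (vs!i))"
  by (simp add: lincomb_def quat_eq_iff)

lemma sum_set_nth: "distinct vs \<Longrightarrow> (\<Sum>v\<in>set vs. f v) = (\<Sum>i<length vs. f (vs!i))"
  by (simp add: sum.distinct_set_conv_list sum_list_sum_nth lessThan_atLeast0)

lemma lin_indep_iff: "lin_indep vs \<longleftrightarrow> distinct vs \<and> qv.independent (set vs)"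
proof
  assume L: "lin_indep vs"
  have D: "distinct vs"
  proof (rule ccontr)
    assume "\<not> distinct vs"
    then obtain i j where ij: "i < length vs" "j < length vs" "i \<noteq> j" "vs!i = vs!j"
      by (auto simp: distinct_conv_nth)
    define c where "c = (\<lambda>k. if k = i then (1::rat) else if k = j then -1 else 0)"
    have "lincomb c vs = (\<Sum>k\<in>{i,j}. qscale (c k) (vs!k))"
      unfolding lincomb_sum by (rule sum.mono_neutral_right) (use ij in \<open>auto simp: c_def\<close>)
    also have "\<dots> = 0" using ij by (simp add: c_def quat_eq_iff)
    finally have "lincomb c vs = qzero" by (simp add: qzero_eq)
    with L ij(1) have "c i = 0" unfolding lin_indep_def by blast
    then show False by (simp add: c_def)
  qed
  moreover have "qv.independent (set vs)"
  proof -
    have "u v = 0" if S: "(\<Sum>v\<in>set vs. qscale (u v) v) = 0" and v: "v \<in> set vs" for u v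
    proof -
      have "(\<Sum>v\<in>set vs. qscale (u v) v) = (\<Sum>i<length vs. qscale (u (vs!i)) (vs!i))"
        using D by (rule sum_set_nth)
      then have "lincomb (\<lambda>i. u (vs!i)) vs = qzero" using S by (simp add: lincomb_sum qzero_eq)
      then have "\<forall>i<length vs. u (vs!i) = 0" using L by (auto simp: lin_indep_def)
      with v show ?thesis by (auto simp: in_set_conv_nth)
    qed
    then show ?thesis using qv.dependent_finite[of "set vs"] by auto
  qed
  ultimately show "distinct vs \<and> qv.independent (set vs)" by simp
next
  assume A: "distinct vs \<and> qv.independent (set vs)"
  show "lin_indep vs" unfolding lin_indep_def
  proof (intro allI impI)
    fix c i assume c: "lincomb c vs = qzero" and i: "i < length vs"
    define u where "u v = c (LEAST k. k < length vs \<and> vs!k = v)" for v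
    have ui: "u (vs!k) = c k" if "k < length vs" for k
    proof -
      have "(LEAST k'. k' < length vs \<and> vs!k' = vs!k) = k"
        using A that by (intro Least_equality) (auto simp: nth_eq_iff_index_eq)
      then show ?thesis by (simp add: u_def)
    qed
    have "(\<Sum>v\<in>set vs. qscale (u v) v) = (\<Sum>k<length vs. qscale (u (vs!k)) (vs!k))"
      using A by (intro sum_set_nth) simp
    also have "\<dots> = lincomb c vs" by (simp add: lincomb_sum ui)
    finally have "(\<Sum>v\<in>set vs. qscale (u v) v) = 0" using c by (simp add: qzero_eq)
    then have "u (vs!i) = 0" using A qv.dependent_finite[of "set vs"] i
      by (metis List.finite_set nth_mem)
    then show "c i = 0" using ui i by simp
  qed
qed

lemma lin_indep_sub: "lin_indep xs \<Longrightarrow> distinct ys \<Longrightarrow> set ys \<subseteq> set xs \<Longrightarrow> lin_indep ys"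
  unfolding lin_indep_iff using qv.independent_mono by blast

lemma exchange:
  assumes "lin_indep us" "lin_indep ws" "length us < length ws"
  shows "\<exists>w\<in>set ws. lin_indep (us @ [w])"
proof (rule ccontr)
  assume N: "\<not> ?thesis"
  have "set ws \<subseteq> qv.span (set us)"
  proof
    fix w assume w: "w \<in> set ws"
    show "w \<in> qv.span (set us)"
    proof (cases "w \<in> set us")
      case True then show ?thesis by (simp add: qv.span_base)
    next
      case False
      show ?thesis
      proof (rule ccontr)
        assume "w \<notin> qv.span (set us)"
        then have "qv.independent (insert w (set us))"
          using assms(1) by (intro qv.independent_insertI) (auto simp: lin_indep_iff)
        then have "lin_indep (us @ [w])" using False assms(1) by (auto simp: lin_indep_iff)
        with N w show False by blast
      qed
    qed
  qed
  then have "card (set ws) \<le> card (set us)"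
    using qv.independent_span_bound[of "set us" "set ws"] assms(2) by (auto simp: lin_indep_iff)
  with assms show False by (auto simp: lin_indep_iff distinct_card)
qed

lemma lincomb_unique:
  assumes "lin_indep vs" "lincomb c vs = lincomb d vs" "k < length vs"
  shows "c k = d k"
proof -
  have "lincomb (\<lambda>i. c i - d i) vs = qzero"
    using assms(2) by (simp add: lincomb_def quat_eq_iff sum_subtractf left_diff_distrib qzero_def)
  then show ?thesis using assms(1,3) unfolding lin_indep_def by fastforce
qed

definition qI :: quat where "qI = Quat 0 1 0 0"
definition qJ :: quat where "qJ = Quat 0 0 1 0"
definition qK :: quat where "qK = Quat 0 0 0 1"

lemma quat_decomp: "x = qscale (re x) qone + qscale (ci x) qI + qscale (cj x) qJ + qscale (ck x) qK"
  by (simp add: quat_eq_iff qI_def qJ_def qK_def)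

lemma span_all: "x \<in> qv.span {qone, qI, qJ, qK}"
  by (subst quat_decomp) (intro qv.span_add qv.span_scale qv.span_base; simp)

lemma spanning:
  assumes "lin_indep vs" "length vs = 4"
  shows "\<exists>c. x = lincomb c vs"
proof -
  have x: "x \<in> qv.span (set vs)"
  proof (rule ccontr)
    assume nx: "x \<notin> qv.span (set vs)"
    then have "qv.independent (insert x (set vs))"
      using assms(1) by (intro qv.independent_insertI) (auto simp: lin_indep_iff)
    moreover have "x \<notin> set vs" using nx qv.span_base by blast
    ultimately have "card (insert x (set vs)) \<le> card {qone, qI, qJ, qK}"
      using qv.independent_span_bound[of "{qone, qI, qJ, qK}" "insert x (set vs)"] span_all by auto
    moreover have "card {qone, qI, qJ, qK} \<le> 4" using card_length[of "[qone, qI, qJ, qK]"] by simp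
    moreover have "card (insert x (set vs)) = 5"
      using assms \<open>x \<notin> set vs\<close> by (simp add: lin_indep_iff distinct_card)
    ultimately show False by simp
  qed
  then obtain u where u: "x = (\<Sum>v\<in>set vs. qscale (u v) v)"
    using qv.span_finite[of "set vs"] by auto
  have "x = lincomb (\<lambda>i. u (vs!i)) vs"
    using u assms(1) by (simp add: lincomb_sum sum_set_nth lin_indep_iff)
  then show ?thesis by blast
qed




lemma zspan_add: "x \<in> zspan vs \<Longrightarrow> y \<in> zspan vs \<Longrightarrow> x + y \<in> zspan vs"
proof -
  assume "x \<in> zspan vs" "y \<in> zspan vs"
  then obtain n m where "x = lincomb (\<lambda>i. of_int (n i)) vs" "y = lincomb (\<lambda>i. of_int (m i)) vs"
    by (auto simp: zspan_def)
  then have "x + y = lincomb (\<lambda>i. of_int (n i + m i)) vs"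
    by (simp add: lincomb_def quat_eq_iff sum.distrib distrib_right)
  then show ?thesis by (auto simp: zspan_def intro!: exI[of _ "\<lambda>i. n i + m i"])
qed

lemma zspan_scale: "x \<in> zspan vs \<Longrightarrow> qscale (of_int k) x \<in> zspan vs"
proof -
  assume "x \<in> zspan vs"
  then obtain n where "x = lincomb (\<lambda>i. of_int (n i)) vs"
    by (auto simp: zspan_def)
  then have "qscale (of_int k) x = lincomb (\<lambda>i. of_int (k * n i)) vs"
    by (simp add: lincomb_def quat_eq_iff sum_distrib_left mult.assoc)
  then show ?thesis by (auto simp: zspan_def intro!: exI[of _ "\<lambda>i. k * n i"])
qed

lemma zspan_diff: "x \<in> zspan vs \<Longrightarrow> y \<in> zspan vs \<Longrightarrow> x - y \<in> zspan vs"
proof -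
  assume "x \<in> zspan vs" "y \<in> zspan vs"
  moreover have "x - y = x + qscale (of_int (-1)) y" by (simp add: quat_eq_iff)
  ultimately show ?thesis by (metis zspan_add zspan_scale)
qed

lemma sum_delta_mult: "k < (n::nat) \<Longrightarrow> (\<Sum>i<n. rat_of_int (if i = k then 1 else 0) * f i) = f k"
proof -
  assume k: "k < n"
  have "(\<Sum>i<n. rat_of_int (if i = k then 1 else 0) * f i) = (\<Sum>i<n. if i = k then f i else 0)"
    by (intro sum.cong) auto
  also have "\<dots> = f k" using k by (subst sum.delta) auto
  finally show ?thesis .
qed

lemma zspan_nth: "k < length vs \<Longrightarrow> vs!k \<in> zspan vs"
proof -
  assume k: "k < length vs"
  have "vs!k = lincomb (\<lambda>i. of_int (if i = k then 1 else 0)) vs"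
    using k by (simp add: lincomb_def quat_eq_iff sum_delta_mult)
  then show ?thesis by (auto simp: zspan_def)
qed

lemma rat_cube_int: fixes r :: rat assumes "4 * r^3 \<in> \<int>" shows "r \<in> \<int>"
proof -
  obtain u w where r: "r = Fract u w" and w: "0 < w" and cp: "coprime u w" by (rule Rat_cases)
  obtain m where m: "4 * r^3 = of_int m" using assms Ints_cases by blast
  have "4 * (of_int u)^3 = of_int m * (of_int w :: rat)^3"
    using m w by (simp add: r Fract_of_int_quotient field_simps power_divide)
  then have "4 * u^3 = m * w^3" by (metis (mono_tags) of_int_eq_iff of_int_mult of_int_power of_int_numeral)
  then have "w^3 dvd 4 * u^3" by (metis dvd_triv_right)
  moreover have "coprime (w^3) (u^3)" using cp by (simp add: coprime_commute)
  ultimately have "w^3 dvd 4" using coprime_dvd_mult_left_iff by blast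
  then have "w^3 \<le> 4" by (simp add: zdvd_imp_le)
  then have "w = 1"
  proof -
    assume h: "w^3 \<le> 4"
    show "w = 1"
    proof (rule ccontr)
      assume "w \<noteq> 1" then have "w \<ge> 2" using w by simp
      then have "w^3 \<ge> 2^3" by (rule power_mono) simp
      with h show False by simp
    qed
  qed
  then show ?thesis by (simp add: r Fract_of_int_quotient)
qed


context
  fixes a b :: int and Ord :: "quat set" and vs :: "quat list"
  assumes ord: "is_order a b Ord" and vs: "length vs = 4" "lin_indep vs" "Ord = zspan vs"
begin

lemma O_add: "x \<in> Ord \<Longrightarrow> y \<in> Ord \<Longrightarrow> x + y \<in> Ord" using vs zspan_add by auto
lemma O_diff: "x \<in> Ord \<Longrightarrow> y \<in> Ord \<Longrightarrow> x - y \<in> Ord" using vs zspan_diff by auto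
lemma O_scale: "x \<in> Ord \<Longrightarrow> qscale (of_int k) x \<in> Ord" using vs zspan_scale by auto
lemma O_mul: "x \<in> Ord \<Longrightarrow> y \<in> Ord \<Longrightarrow> qmul a b x y \<in> Ord" using ord by (auto simp: is_order_def)
lemma O_one: "qone \<in> Ord" using ord by (auto simp: is_order_def)
lemma O_scalar: "qscalar (of_int k) \<in> Ord"
proof -
  have "qscalar (of_int k) = qscale (of_int k) qone" by (simp add: quat_eq_iff)
  then show ?thesis using O_scale O_one by metis
qed

definition coord :: "quat \<Rightarrow> nat \<Rightarrow> rat" where "coord x = (SOME c. x = lincomb c vs)"

lemma coord: "x = lincomb (coord x) vs"
  unfolding coord_def using spanning[OF vs(2,1)] by (rule someI_ex)

lemma coord_lincomb: "k < 4 \<Longrightarrow> coord (lincomb c vs) k = c k"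
  using lincomb_unique[OF vs(2), of "coord (lincomb c vs)" c k] coord vs(1) by simp

lemma coord_add: "k < 4 \<Longrightarrow> coord (x + y) k = coord x k + coord y k"
proof -
  assume k: "k < 4"
  have "x + y = lincomb (\<lambda>i. coord x i + coord y i) vs"
    using coord[of x] coord[of y] by (simp add: lincomb_def quat_eq_iff sum.distrib distrib_right)
  then show ?thesis using coord_lincomb[OF k] by metis
qed

lemma coord_scale: "k < 4 \<Longrightarrow> coord (qscale c x) k = c * coord x k"
proof -
  assume k: "k < 4"
  have "qscale c x = lincomb (\<lambda>i. c * coord x i) vs"
    using coord[of x] by (simp add: lincomb_def quat_eq_iff sum_distrib_left mult.assoc)
  then show ?thesis using coord_lincomb[OF k] by metis
qed

lemma coord_int: "x \<in> Ord \<Longrightarrow> k < 4 \<Longrightarrow> coord x k \<in> \<int>"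
proof -
  assume "x \<in> Ord" "k < 4"
  then obtain n where "x = lincomb (\<lambda>i. of_int (n i)) vs" using vs by (auto simp: zspan_def)
  then show ?thesis using coord_lincomb[OF \<open>k < 4\<close>] by simp
qed

lemma lincomb_comp:
  "re (lincomb c vs) = (\<Sum>k<4. c k * re (vs!k))" "ci (lincomb c vs) = (\<Sum>k<4. c k * ci (vs!k))"
  "cj (lincomb c vs) = (\<Sum>k<4. c k * cj (vs!k))" "ck (lincomb c vs) = (\<Sum>k<4. c k * ck (vs!k))"
  by (simp_all add: lincomb_def vs(1))

lemma mul_decomp: "qmul a b y w = qscale (re w) (qmul a b y qone) + qscale (ci w) (qmul a b y qI)
   + qscale (cj w) (qmul a b y qJ) + qscale (ck w) (qmul a b y qK)"
  by (simp add: quat_eq_iff qmul_def qI_def qJ_def qK_def algebra_simps)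

lemma trace_int: "y \<in> Ord \<Longrightarrow> 4 * re y \<in> \<int>"
proof -
  assume y: "y \<in> Ord"
  have "(\<Sum>k<4. coord (qmul a b y (vs!k)) k) \<in> \<int>"
    using y vs zspan_nth O_mul coord_int by (intro Ints_sum) auto
  also have "(\<Sum>k<4. coord (qmul a b y (vs!k)) k) =
     (\<Sum>k<4. re (vs!k) * coord (qmul a b y qone) k + ci (vs!k) * coord (qmul a b y qI) k
           + cj (vs!k) * coord (qmul a b y qJ) k + ck (vs!k) * coord (qmul a b y qK) k)"
    by (intro sum.cong refl, subst mul_decomp) (simp add: coord_add coord_scale)
  also have "\<dots> = re (lincomb (coord (qmul a b y qone)) vs) + ci (lincomb (coord (qmul a b y qI)) vs)
      + cj (lincomb (coord (qmul a b y qJ)) vs) + ck (lincomb (coord (qmul a b y qK)) vs)"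
    by (simp add: lincomb_comp sum.distrib mult.commute)
  also have "\<dots> = re (qmul a b y qone) + ci (qmul a b y qI) + cj (qmul a b y qJ) + ck (qmul a b y qK)"
    using coord by simp
  also have "\<dots> = 4 * re y" by (simp add: qmul_def qI_def qJ_def qK_def qone_def)
  finally show ?thesis .
qed

lemma scalar_int: "qscalar r \<in> Ord \<Longrightarrow> r \<in> \<int>"
proof -
  assume r: "qscalar r \<in> Ord"
  have "qscalar (r^3) = qmul a b (qscalar r) (qmul a b (qscalar r) (qscalar r))"
    by (simp add: quat_eq_iff qmul_def power3_eq_cube)
  then have "qscalar (r^3) \<in> Ord" using r O_mul by metis
  then have "4 * r^3 \<in> \<int>" using trace_int by fastforce
  then show ?thesis by (rule rat_cube_int)
qed

lemma integral: assumes x: "x \<in> Ord" shows "qtr x \<in> \<int>" "qnorm a b x \<in> \<int>"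
proof -
  define T where "T = qtr x"
  define N where "N = qnorm a b x"
  have sq: "qmul a b x x = qscale T x - qscalar N"
    by (simp add: quat_eq_iff qmul_def T_def N_def qtr_def qnorm_def power2_eq_square algebra_simps)
  have "4 * re x \<in> \<int>" using trace_int x by blast
  then obtain m where m: "2 * T = of_int m" by (auto simp: T_def qtr_def elim!: Ints_cases)
  have "4 * re (qmul a b x x) \<in> \<int>" using trace_int O_mul x by blast
  then have h1: "2 * T^2 - 4 * N \<in> \<int>"
    by (simp add: sq T_def qtr_def power2_eq_square algebra_simps)
  have "qmul a b (qscale (of_int 2) x) (qscalar (of_int m) - qscale (of_int 2) x) = qscalar (4 * N)"
    using m by (simp add: quat_eq_iff qmul_def T_def N_def qtr_def qnorm_def power2_eq_square algebra_simps)
  moreover have "qmul a b (qscale (of_int 2) x) (qscalar (of_int m) - qscale (of_int 2) x) \<in> Ord"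
    using x by (intro O_mul O_scale O_diff O_scalar)
  ultimately have h2: "4 * N \<in> \<int>" using scalar_int by metis
  have "2 * T^2 \<in> \<int>" using h1 h2 by (metis Ints_add diff_add_cancel)
  then obtain j where "2 * T^2 = of_int j" by (auto elim!: Ints_cases)
  moreover have "T = of_int m / 2" using m by simp
  ultimately have "(of_int m)^2 = (2 * of_int j :: rat)" by (simp add: power2_eq_square field_simps)
  then have "m^2 = 2 * j" by (metis (mono_tags) of_int_eq_iff of_int_mult of_int_power of_int_numeral)
  then have "even m" by (metis dvd_triv_left even_power zero_less_numeral)
  then obtain k where "m = 2 * k" by blast
  then have Tk: "T = of_int k" using m by simp
  then show "qtr x \<in> \<int>" by (simp add: T_def)
  have "qmul a b x (qscalar T - x) = qscalar N"
    by (simp add: quat_eq_iff qmul_def T_def N_def qtr_def qnorm_def power2_eq_square algebra_simps)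
  moreover have "qmul a b x (qscalar T - x) \<in> Ord" using x Tk O_scalar by (intro O_mul O_diff) simp_all
  ultimately show "qnorm a b x \<in> \<int>" using scalar_int N_def by metis
qed

end




lemma distinct_take_snoc: "distinct (xs @ [w]) \<Longrightarrow> j \<le> length xs \<Longrightarrow> distinct (take j xs @ [w])"
  using set_take_subset[of j xs] by (auto simp: distinct_take)

lemma rank_ge_mono: "rank_ge S i \<Longrightarrow> j \<le> i \<Longrightarrow> rank_ge S j"
  unfolding rank_ge_def
proof (elim exE conjE)
  fix ws assume "length ws = i" "set ws \<subseteq> S" "lin_indep ws" "j \<le> i"
  then show "\<exists>vs. length vs = j \<and> set vs \<subseteq> S \<and> lin_indep vs"
    using lin_indep_sub[of ws "take j ws"] set_take_subset[of j ws]
    by (intro exI[of _ "take j ws"]) (auto simp: lin_indep_iff distinct_take dest: in_set_takeD)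
qed

lemma succ_min_mono: "is_succ_min Q L j D1 \<Longrightarrow> is_succ_min Q L i D2 \<Longrightarrow> j \<le> i \<Longrightarrow> D1 \<le> D2"
  unfolding is_succ_min_def using rank_ge_mono by blast

lemma J:
  assumes pre: "\<forall>j<i. is_succ_min Q L (Suc j) (Q (vs!j))" and sub: "set (take i vs) \<subseteq> L"
    and il: "i \<le> length vs" and D: "is_succ_min Q L (Suc i) D" and w: "w \<in> L"
    and ind: "lin_indep (take i vs @ [w])"
  shows "D \<le> Q w"
proof -
  define lam where "lam j = (if j < i then Q (vs!j) else D)" for j
  have "\<forall>j\<le>i. lam j \<le> Q w"
  proof (intro allI)
    fix j show "j \<le> i \<longrightarrow> lam j \<le> Q w"
    proof (induction j rule: less_induct)
      case (less j)
      show ?case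
      proof
        assume ji: "j \<le> i"
        have sm: "is_succ_min Q L (Suc j) (lam j)"
          using pre D ji by (cases "j < i") (auto simp: lam_def)
        have ind2: "lin_indep (take j vs @ [w])"
        proof (rule lin_indep_sub[OF ind])
          have "distinct (take i vs @ [w])" using ind by (simp add: lin_indep_iff)
          then have "distinct (take j (take i vs) @ [w])"
            by (rule distinct_take_snoc) (use ji il in simp)
          then show "distinct (take j vs @ [w])" using ji by (simp add: min_def)
          show "set (take j vs @ [w]) \<subseteq> set (take i vs @ [w])"
            using ji set_take_subset_set_take by fastforce
        qed
        have "set (take j vs @ [w]) \<subseteq> {v \<in> L. Q v \<le> Q w}"
        proof
          fix v assume "v \<in> set (take j vs @ [w])"
          then consider "v = w" | k where "k < j" "k < length vs" "v = vs!k"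
            by (auto simp: in_set_conv_nth)
          then show "v \<in> {v \<in> L. Q v \<le> Q w}"
          proof cases
            case 1 then show ?thesis using w by simp
          next
            case 2
            have "lam k \<le> Q w" using less.IH[of k] 2 ji by simp
            then have "Q v \<le> Q w" using 2 ji by (simp add: lam_def)
            moreover have "v \<in> set (take i vs)" using 2 ji by (auto simp: in_set_conv_nth)
            ultimately show ?thesis using sub by auto
          qed
        qed
        then have "rank_ge {v \<in> L. Q v \<le> Q w} (Suc j)"
          unfolding rank_ge_def using ind2 ji il by (intro exI[of _ "take j vs @ [w]"]) auto
        then show "lam j \<le> Q w" using sm unfolding is_succ_min_def by blast
      qed
    qed
  qed
  then have "lam i \<le> Q w" by blast
  then show ?thesis by (simp add: lam_def)
qed




lemma gross_comp[simp]: "re (gross_map x) = 0" "ci (gross_map x) = 2 * ci x"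
  "cj (gross_map x) = 2 * cj x" "ck (gross_map x) = 2 * ck x"
  by (simp_all add: gross_map_def qtr_def qsub_def)

lemma gross_norm: "qnorm a b (gross_map x) = 4 * qnorm a b x - (qtr x)^2"
  by (simp add: qnorm_def qtr_def power2_eq_square algebra_simps)

lemma gross_lincomb: "gross_map (lincomb c xs) = lincomb c (map gross_map xs)"
  by (simp add: quat_eq_iff lincomb_def sum_distrib_left mult.left_commute)

lemma lincomb_Cons: "lincomb c (x # xs) = qscale (c 0) x + lincomb (\<lambda>i. c (Suc i)) xs"
  unfolding lincomb_sum length_Cons sum.lessThan_Suc_shift by simp

lemma F4: "lin_indep (qone # xs) \<longleftrightarrow> lin_indep (map gross_map xs)"
proof
  assume L: "lin_indep (qone # xs)"
  show "lin_indep (map gross_map xs)" unfolding lin_indep_def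
  proof (intro allI impI)
    fix d i assume d: "lincomb d (map gross_map xs) = qzero" and i: "i < length (map gross_map xs)"
    define r where "r = re (lincomb d xs)"
    have g0: "gross_map (lincomb d xs) = qzero" using d by (simp add: gross_lincomb)
    define c where "c k = (if k = 0 then - r else d (k - 1))" for k
    have "lincomb c (qone # xs) = qzero"
      using g0 by (simp add: lincomb_Cons c_def quat_eq_iff r_def)
    then have "c (Suc i) = 0" using L i unfolding lin_indep_def by fastforce
    then show "d i = 0" by (simp add: c_def)
  qed
next
  assume L: "lin_indep (map gross_map xs)"
  show "lin_indep (qone # xs)" unfolding lin_indep_def
  proof (intro allI impI)
    fix c i assume c: "lincomb c (qone # xs) = qzero" and i: "i < length (qone # xs)"
    have "gross_map (lincomb c (qone # xs)) = lincomb (\<lambda>i. c (Suc i)) (map gross_map xs)"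
      by (simp add: lincomb_Cons gross_lincomb[symmetric] quat_eq_iff)
    then have "lincomb (\<lambda>i. c (Suc i)) (map gross_map xs) = qzero"
      using c by (simp add: quat_eq_iff)
    then have cs: "\<forall>k<length xs. c (Suc k) = 0" using L unfolding lin_indep_def by auto
    then have "lincomb (\<lambda>i. c (Suc i)) xs = qzero"
      by (simp add: lincomb_def quat_eq_iff)
    then have "c 0 = 0" using c by (simp add: lincomb_Cons quat_eq_iff)
    then show "c i = 0" using cs i by (cases i) auto
  qed
qed




lemma int_le_lemma: fixes A B :: rat assumes "A \<in> \<int>" "B \<in> \<int>" "4 * A \<le> 4 * B + 1" shows "A \<le> B"
proof -
  obtain x y where xy: "A = of_int x" "B = of_int y" using assms(1,2) by (auto elim!: Ints_cases)
  have "rat_of_int (4*x) \<le> rat_of_int (4*y+1)" using assms(3) xy by simp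
  then have "4*x \<le> 4*y+1" by (simp only: of_int_le_iff)
  then have "x \<le> y" by linarith
  then show ?thesis using xy by simp
qed

lemma int_lt_lemma: fixes A B :: rat assumes "A \<in> \<int>" "B \<in> \<int>" "A < B" shows "A + 1 \<le> B"
proof -
  obtain x y where xy: "A = of_int x" "B = of_int y" using assms(1,2) by (auto elim!: Ints_cases)
  then have "x < y" using assms(3) by simp
  then have "x + 1 \<le> y" by linarith
  then have "rat_of_int (x+1) \<le> rat_of_int y" by (simp only: of_int_le_iff)
  then show ?thesis using xy by simp
qed

lemma int_pos_lemma: fixes A :: rat assumes "A \<in> \<int>" "0 < A" shows "1 \<le> A"
  using int_lt_lemma[of 0 A] assms by simp

lemma int_sq_ge1: fixes s :: rat assumes "s \<in> \<int>" "s \<noteq> 0" shows "1 \<le> s^2"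
proof -
  have "s^2 \<in> \<int>" using assms(1) by simp
  moreover have "0 < s^2" using assms(2) by simp
  ultimately show ?thesis by (rule int_pos_lemma)
qed

lemma indep_nonzero: "lin_indep xs \<Longrightarrow> x \<in> set xs \<Longrightarrow> x \<noteq> 0"
  using qv.dependent_zero by (auto simp: lin_indep_iff)

lemma norm_tr01: "qtr x \<in> {0,1} \<Longrightarrow> qnorm a b (gross_map x) = 4 * qnorm a b x - qtr x"
  by (auto simp: gross_norm)

lemma qnorm_one: "qnorm a b qone = 1" by (simp add: qnorm_def)

context
  fixes a b :: int and Ord :: "quat set" and vs :: "quat list"
  assumes ord: "is_order a b Ord" and vs: "length vs = 4" "lin_indep vs" "Ord = zspan vs"
    and neg: "a < 0" "b < 0"
begin

lemma qnorm_pos: assumes "x \<noteq> 0" shows "0 < qnorm a b x"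
proof -
  have a: "0 \<le> - of_int a * (ci x)^2" using neg by (intro mult_nonneg_nonneg) auto
  have b: "0 \<le> - of_int b * (cj x)^2" using neg by (intro mult_nonneg_nonneg) auto
  have ab: "0 < (of_int (a*b) :: rat)" using neg by (simp add: mult_neg_neg)
  have c: "0 \<le> of_int (a*b) * (ck x)^2" using ab by (intro mult_nonneg_nonneg) auto
  have r: "0 \<le> (re x)^2" by simp
  have eq: "qnorm a b x = (re x)^2 + (- of_int a * (ci x)^2) + (- of_int b * (cj x)^2) + of_int (a*b) * (ck x)^2"
    by (simp add: qnorm_def)
  show ?thesis
  proof (rule ccontr)
    assume "\<not> ?thesis"
    then have z: "(re x)^2 = 0" "- of_int a * (ci x)^2 = 0" "- of_int b * (cj x)^2 = 0" "of_int (a*b) * (ck x)^2 = (0::rat)"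
      using a b c r eq by linarith+
    then have "re x = 0" "ci x = 0" "cj x = 0" "ck x = 0" using neg ab by auto
    then have "x = 0" by (simp add: quat_eq_iff)
    with assms show False by simp
  qed
qed

lemma norm_ge1: "x \<in> Ord \<Longrightarrow> x \<noteq> 0 \<Longrightarrow> 1 \<le> qnorm a b x"
  using integral(2)[OF ord vs] qnorm_pos[of x] int_pos_lemma by blast

lemma lift: assumes "\<beta> \<in> gross_lattice Ord" shows "\<exists>\<gamma>\<in>Ord. gross_map \<gamma> = \<beta> \<and> qtr \<gamma> \<in> {0,1}"
proof -
  obtain x where x: "x \<in> Ord" "gross_map x = \<beta>" using assms by (auto simp: gross_lattice_def)
  obtain n where n: "qtr x = of_int n" using integral(1)[OF ord vs x(1)] by (auto elim!: Ints_cases)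
  define \<gamma> where "\<gamma> = x - qscalar (of_int (n div 2))"
  have "\<gamma> \<in> Ord" unfolding \<gamma>_def using x(1) O_scalar[OF ord vs] O_diff[OF ord vs] by blast
  moreover have "gross_map \<gamma> = \<beta>" using x(2) by (simp add: \<gamma>_def quat_eq_iff[of "gross_map _"])
  moreover have "qtr \<gamma> = of_int (n mod 2)"
    using n by (simp add: \<gamma>_def qtr_def minus_div_mult_eq_mod[symmetric] algebra_simps)
  moreover have "n mod 2 = 0 \<or> n mod 2 = 1" by presburger
  ultimately show ?thesis by auto
qed

end




lemma lin_indep_take: "lin_indep xs \<Longrightarrow> lin_indep (take k xs)"
  using lin_indep_sub[of xs "take k xs"] set_take_subset[of k xs] by (simp add: lin_indep_iff distinct_take)

lemma lin_indep_Cons_take: "lin_indep (x # xs) \<Longrightarrow> lin_indep (x # take k xs)"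
  using lin_indep_take[of "x # xs" "Suc k"] by simp

context
  fixes a b :: int and Ord :: "quat set" and vs :: "quat list"
  assumes ord: "is_order a b Ord" and vs: "length vs = 4" "lin_indep vs" "Ord = zspan vs"
    and neg: "a < 0" "b < 0"
begin

lemma main:
  fixes al :: "quat list" and n :: nat
  assumes len: "length al = n" and alO: "set al \<subseteq> Ord" and tr01: "\<forall>x\<in>set al. qtr x \<in> {0,1}"
    and ind: "lin_indep (map gross_map al)"
  shows "attains_succ_min (qnorm a b) (gross_lattice Ord) n (map gross_map al) \<longleftrightarrow>
    (attains_succ_min (qnorm a b) Ord (Suc n) (qone # al) \<and>
     (\<forall>i<n. qtr (al!i) = 0 \<longrightarrow> (\<forall>\<gamma>\<in>Ord. qnorm a b \<gamma> = qnorm a b (al!i) \<and>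
          lin_indep (qone # take i al @ [\<gamma>]) \<longrightarrow> qtr \<gamma> = 0)))"
proof -
  let ?Q = "qnorm a b" and ?T = "gross_lattice Ord" and ?g = gross_map
  define bs where "bs = map ?g al"
  have lenb: "length bs = n" using len by (simp add: bs_def)
  have alO': "\<And>i. i < n \<Longrightarrow> al!i \<in> Ord" using alO len by auto
  have tr': "\<And>i. i < n \<Longrightarrow> qtr (al!i) \<in> {0,1}" using tr01 len by auto
  have Qb: "\<And>i. i < n \<Longrightarrow> ?Q (bs!i) = 4 * ?Q (al!i) - qtr (al!i)"
    using tr' len by (simp add: bs_def norm_tr01)
  have Qint: "\<And>x. x \<in> Ord \<Longrightarrow> ?Q x \<in> \<int>" using integral(2)[OF ord vs] by blast
  have trint: "\<And>x. x \<in> Ord \<Longrightarrow> qtr x \<in> \<int>" using integral(1)[OF ord vs] by blast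
  have indO: "lin_indep (qone # al)" using ind F4 by simp
  have bT: "set bs \<subseteq> ?T" using alO by (auto simp: bs_def gross_lattice_def)
  have Ogt: "\<And>x. x \<in> Ord \<Longrightarrow> ?g x \<in> ?T" by (simp add: gross_lattice_def)
  have ind_bs: "lin_indep bs" using ind by (simp add: bs_def)
  have takeb: "\<And>k. take k bs = map ?g (take k al)" by (simp add: bs_def take_map)
  have O1: "qone \<in> Ord" using ord by (simp add: is_order_def)
  have setO: "set (qone # al) \<subseteq> Ord" using O1 alO by simp
  have nz: "\<And>i. i < n \<Longrightarrow> 1 \<le> ?Q (al!i)"
    using norm_ge1[OF ord vs neg] indep_nonzero[OF indO] alO' len by simp
  show ?thesis
  proof
    assume A: "attains_succ_min ?Q ?T n (map ?g al)"
    then have SM: "\<forall>i<n. is_succ_min ?Q ?T (Suc i) (?Q (bs!i))"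
      using len by (auto simp: attains_succ_min_def bs_def)
    have SMO: "is_succ_min ?Q Ord (Suc i) (?Q ((qone # al)!i))" if i: "i < Suc n" for i
    proof (cases i)
      case 0
      have "rank_ge {v \<in> Ord. ?Q v \<le> 1} 1"
      proof -
        have "lin_indep [qone]" using lin_indep_take[OF indO, of 1] by simp
        then show ?thesis unfolding rank_ge_def using O1
          by (intro exI[of _ "[qone]"]) (simp add: qnorm_one)
      qed
      moreover have "1 \<le> D'" if r1: "rank_ge {v \<in> Ord. ?Q v \<le> D'} 1" for D'
      proof -
        obtain w where "lin_indep [w]" "w \<in> Ord" "?Q w \<le> D'" using r1
          by (auto simp: rank_ge_def length_Suc_conv)
        then show ?thesis using norm_ge1[OF ord vs neg, of w] indep_nonzero[of "[w]" w] by simp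
      qed
      ultimately show ?thesis using 0 by (simp add: is_succ_min_def qnorm_one)
    next
      case (Suc k)
      then have k: "k < n" using i by simp
      have rank: "rank_ge {v \<in> Ord. ?Q v \<le> ?Q (al!k)} (Suc (Suc k))"
        unfolding rank_ge_def
      proof (intro exI[of _ "qone # take (Suc k) al"] conjI)
        show "length (qone # take (Suc k) al) = Suc (Suc k)" using k len by simp
        show "lin_indep (qone # take (Suc k) al)"
          using indO by (rule lin_indep_Cons_take)
        show "set (qone # take (Suc k) al) \<subseteq> {v \<in> Ord. ?Q v \<le> ?Q (al!k)}"
        proof
          fix v assume "v \<in> set (qone # take (Suc k) al)"
          then consider "v = qone" | j where "j \<le> k" "v = al!j"
          proof -
            assume h1: "v = qone \<Longrightarrow> thesis" and h2: "\<And>j. j \<le> k \<Longrightarrow> v = al!j \<Longrightarrow> thesis"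
              and v: "v \<in> set (qone # take (Suc k) al)"
            show thesis
            proof (cases "v = qone")
              case True then show ?thesis by (rule h1)
            next
              case False
              then have "v \<in> set (take (Suc k) al)" using v by simp
              then obtain j where "j < length (take (Suc k) al)" "v = take (Suc k) al ! j"
                by (auto simp: in_set_conv_nth)
              then show ?thesis using h2[of j] by simp
            qed
          qed
          then show "v \<in> {v \<in> Ord. ?Q v \<le> ?Q (al!k)}"
          proof cases
            case 1 then show ?thesis using O1 nz[OF k] by (simp add: qnorm_one)
          next
            case 2
            have jn: "j < n" using 2(1) k by simp
            have s1: "is_succ_min ?Q ?T (Suc j) (?Q (bs!j))" using SM jn by blast
            have s2: "is_succ_min ?Q ?T (Suc k) (?Q (bs!k))" using SM k by blast
            have "?Q (bs!j) \<le> ?Q (bs!k)" using succ_min_mono[OF s1 s2] 2(1) by simp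
            moreover have "qtr (al!j) \<le> 1" "0 \<le> qtr (al!k)" using tr'[OF jn] tr'[OF k] by auto
            ultimately have "4 * ?Q (al!j) \<le> 4 * ?Q (al!k) + 1" using Qb[OF jn] Qb[OF k] by linarith
            then have "?Q (al!j) \<le> ?Q (al!k)" by (rule int_le_lemma[OF Qint[OF alO'[OF jn]] Qint[OF alO'[OF k]]])
            then show ?thesis using alO'[OF jn] 2(2) by simp
          qed
        qed
      qed
      have "?Q (al!k) \<le> D'" if r: "rank_ge {v \<in> Ord. ?Q v \<le> D'} (Suc (Suc k))" for D'
      proof -
        obtain ws where ws: "length ws = Suc (Suc k)" "set ws \<subseteq> {v \<in> Ord. ?Q v \<le> D'}" "lin_indep ws"
          using r by (auto simp: rank_ge_def)
        have "lin_indep (qone # take k al)"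
          using indO by (rule lin_indep_Cons_take)
        moreover have "length (qone # take k al) < length ws" using ws k len by simp
        ultimately obtain w where w: "w \<in> set ws" "lin_indep ((qone # take k al) @ [w])"
          using exchange[of "qone # take k al" ws] ws(3) by blast
        have wO: "w \<in> Ord" "?Q w \<le> D'" using w(1) ws(2) by auto
        have "lin_indep (qone # (take k al @ [w]))" using w(2) by simp
        then have "lin_indep (map ?g (take k al @ [w]))" using F4 by blast
        then have li: "lin_indep (take k bs @ [?g w])" by (simp add: takeb)
        have pre: "\<forall>j<k. is_succ_min ?Q ?T (Suc j) (?Q (bs!j))" using SM k by force
        have st: "set (take k bs) \<subseteq> ?T" using bT set_take_subset[of k bs] by blast
        have kl: "k \<le> length bs" using k lenb by simp
        have smk: "is_succ_min ?Q ?T (Suc k) (?Q (bs!k))" using SM k by blast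
        have "?Q (bs!k) \<le> ?Q (?g w)" by (rule J[OF pre st kl smk Ogt[OF wO(1)] li])
        moreover have "?Q (?g w) \<le> 4 * ?Q w" by (simp add: gross_norm)
        moreover have "qtr (al!k) \<le> 1" using tr'[OF k] by auto
        ultimately have "4 * ?Q (al!k) \<le> 4 * ?Q w + 1" using Qb[OF k] by linarith
        then have "?Q (al!k) \<le> ?Q w" by (rule int_le_lemma[OF Qint[OF alO'[OF k]] Qint[OF wO(1)]])
        then show ?thesis using wO by simp
      qed
      then show ?thesis using rank Suc by (simp add: is_succ_min_def)
    qed
    have C: "\<forall>i<n. qtr (al!i) = 0 \<longrightarrow> (\<forall>\<gamma>\<in>Ord. ?Q \<gamma> = ?Q (al!i) \<and>
          lin_indep (qone # take i al @ [\<gamma>]) \<longrightarrow> qtr \<gamma> = 0)"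
    proof (intro allI impI ballI, elim conjE)
      fix i \<gamma> assume i: "i < n" and t0: "qtr (al!i) = 0" and g: "\<gamma> \<in> Ord" and Qg: "?Q \<gamma> = ?Q (al!i)"
        and li: "lin_indep (qone # take i al @ [\<gamma>])"
      show "qtr \<gamma> = 0"
      proof (rule ccontr)
        assume nt: "qtr \<gamma> \<noteq> 0"
        have "1 \<le> (qtr \<gamma>)^2" using nt trint[OF g] by (intro int_sq_ge1)
        have "lin_indep (take i bs @ [?g \<gamma>])" using li F4[of "take i al @ [\<gamma>]"] by (simp add: takeb)
        then have "?Q (bs!i) \<le> ?Q (?g \<gamma>)"
          using SM i lenb bT set_take_subset[of i bs] Ogt[OF g]
          by (intro J[of i ?Q ?T bs]) auto
        then show False using Qb[OF i] t0 Qg \<open>1 \<le> (qtr \<gamma>)^2\<close> by (simp add: gross_norm)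
      qed
    qed
    show "attains_succ_min ?Q Ord (Suc n) (qone # al) \<and> (\<forall>i<n. qtr (al!i) = 0 \<longrightarrow> (\<forall>\<gamma>\<in>Ord. ?Q \<gamma> = ?Q (al!i) \<and>
          lin_indep (qone # take i al @ [\<gamma>]) \<longrightarrow> qtr \<gamma> = 0))"
      using SMO C setO indO len by (simp add: attains_succ_min_def)
  next
    assume B: "attains_succ_min ?Q Ord (Suc n) (qone # al) \<and> (\<forall>i<n. qtr (al!i) = 0 \<longrightarrow> (\<forall>\<gamma>\<in>Ord. ?Q \<gamma> = ?Q (al!i) \<and>
          lin_indep (qone # take i al @ [\<gamma>]) \<longrightarrow> qtr \<gamma> = 0))"
    then have SMO: "\<forall>i<Suc n. is_succ_min ?Q Ord (Suc i) (?Q ((qone # al)!i))"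
      and B2: "\<And>i \<gamma>. i < n \<Longrightarrow> qtr (al!i) = 0 \<Longrightarrow> \<gamma> \<in> Ord \<Longrightarrow> ?Q \<gamma> = ?Q (al!i) \<Longrightarrow>
          lin_indep (qone # take i al @ [\<gamma>]) \<Longrightarrow> qtr \<gamma> = 0"
      by (auto simp: attains_succ_min_def)
    have SMk: "is_succ_min ?Q ?T (Suc k) (?Q (bs!k))" if k: "k < n" for k
    proof -
      have SMOk: "is_succ_min ?Q Ord (Suc (Suc k)) (?Q (al!k))" using SMO k by auto
      have kO: "al!k \<in> Ord" by (rule alO'[OF k])
      have rank: "rank_ge {v \<in> ?T. ?Q v \<le> ?Q (bs!k)} (Suc k)"
        unfolding rank_ge_def
      proof (intro exI[of _ "take (Suc k) bs"] conjI)
        show "length (take (Suc k) bs) = Suc k" using k lenb by simp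
        show "lin_indep (take (Suc k) bs)" using ind_bs by (rule lin_indep_take)
        show "set (take (Suc k) bs) \<subseteq> {v \<in> ?T. ?Q v \<le> ?Q (bs!k)}"
        proof
          fix v assume "v \<in> set (take (Suc k) bs)"
          then obtain j where j0: "j < length (take (Suc k) bs)" "v = take (Suc k) bs ! j"
            by (auto simp: in_set_conv_nth)
          then have j: "j \<le> k" "v = bs!j" by auto
          have jn: "j < n" using j k by simp
          have vT: "v \<in> ?T" using j jn lenb bT by auto
          have "?Q (bs!j) \<le> ?Q (bs!k)"
          proof (cases "j = k")
            case True then show ?thesis by simp
          next
            case False
            then have jk: "j < k" using j by simp
            have jO: "al!j \<in> Ord" by (rule alO'[OF jn])
            have s1: "is_succ_min ?Q Ord (Suc (Suc j)) (?Q (al!j))" using SMO jn by auto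
            have Ale: "?Q (al!j) \<le> ?Q (al!k)" using succ_min_mono[OF s1 SMOk] jk by simp
            have t1: "0 \<le> qtr (al!j)" "qtr (al!j) \<le> 1" "0 \<le> qtr (al!k)" "qtr (al!k) \<le> 1"
              using tr'[OF jn] tr'[OF k] by auto
            show ?thesis
            proof (cases "?Q (al!j) = ?Q (al!k)")
              case False
              then have "?Q (al!j) < ?Q (al!k)" using Ale by simp
              then have "?Q (al!j) + 1 \<le> ?Q (al!k)" by (rule int_lt_lemma[OF Qint[OF jO] Qint[OF kO]])
              then show ?thesis using Qb[OF jn] Qb[OF k] t1 by linarith
            next
              case eq: True
              have "qtr (al!j) = 1 \<or> qtr (al!k) = 0"
              proof (rule ccontr)
                assume "\<not> ?thesis"
                then have tj: "qtr (al!j) = 0" and tk: "qtr (al!k) = 1" using tr'[OF jn] tr'[OF k] by auto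
                have dal: "distinct (qone # al)" using indO by (simp add: lin_indep_iff)
                have "al!k \<notin> set (take j al)"
                proof
                  assume "al!k \<in> set (take j al)"
                  then obtain l where l: "l < length (take j al)" "take j al ! l = al!k" by (auto simp: in_set_conv_nth)
                  then have "l < j" "al!l = al!k" by auto
                  moreover have "distinct al" using dal by simp
                  ultimately show False using jk k len nth_eq_iff_index_eq[of al l k] by simp
                qed
                moreover have "qone \<noteq> al!k" using dal k len by (metis distinct.simps(2) nth_mem)
                moreover have "qone \<notin> set (take j al)" using dal set_take_subset[of j al] by auto
                moreover have "distinct (take j al)" using dal by (simp add: distinct_take)
                ultimately have "distinct (qone # take j al @ [al!k])" by simp
                moreover have "set (qone # take j al @ [al!k]) \<subseteq> set (qone # al)"
                  using k len set_take_subset[of j al] by auto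
                ultimately have "lin_indep (qone # take j al @ [al!k])"
                  using lin_indep_sub[OF indO] by blast
                then have "qtr (al!k) = 0" using B2[OF jn tj kO] eq by simp
                with tk show False by simp
              qed
              then show ?thesis using Qb[OF jn] Qb[OF k] t1 eq by auto
            qed
          qed
          then show "v \<in> {v \<in> ?T. ?Q v \<le> ?Q (bs!k)}" using vT j by simp
        qed
      qed
      have "?Q (bs!k) \<le> E" if r: "rank_ge {v \<in> ?T. ?Q v \<le> E} (Suc k)" for E
      proof -
        obtain ws where ws: "length ws = Suc k" "set ws \<subseteq> {v \<in> ?T. ?Q v \<le> E}" "lin_indep ws"
          using r unfolding rank_ge_def by blast
        have "lin_indep (take k bs)" using ind_bs by (rule lin_indep_take)
        moreover have "length (take k bs) < length ws" using ws k lenb by simp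
        ultimately obtain \<delta> where d: "\<delta> \<in> set ws" "lin_indep (take k bs @ [\<delta>])"
          using exchange[of "take k bs" ws] ws(3) by blast
        have dT: "\<delta> \<in> ?T" "?Q \<delta> \<le> E" using d(1) ws(2) by auto
        obtain \<gamma> where g: "\<gamma> \<in> Ord" "?g \<gamma> = \<delta>" "qtr \<gamma> \<in> {0,1}" using lift[OF ord vs neg dT(1)] by blast
        have "lin_indep (map ?g (take k al @ [\<gamma>]))" using d(2) g(2) by (simp add: takeb)
        then have li0: "lin_indep (qone # (take k al @ [\<gamma>]))" using F4 by blast
        then have li: "lin_indep (take (Suc k) (qone # al) @ [\<gamma>])" by simp
        have pre: "\<forall>j<Suc k. is_succ_min ?Q Ord (Suc j) (?Q ((qone # al)!j))" using SMO k by force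
        have st: "set (take (Suc k) (qone # al)) \<subseteq> Ord" using setO set_take_subset[of "Suc k" "qone # al"] by blast
        have kl: "Suc k \<le> length (qone # al)" using k len by simp
        have smk: "is_succ_min ?Q Ord (Suc (Suc k)) (?Q ((qone # al)!(Suc k)))" using SMOk by simp
        have mle: "?Q (al!k) \<le> ?Q \<gamma>" using J[OF pre st kl smk g(1) li] by simp
        have Qd: "?Q \<delta> = 4 * ?Q \<gamma> - qtr \<gamma>" using g(2,3) norm_tr01 by blast
        have t1: "0 \<le> qtr \<gamma>" "qtr \<gamma> \<le> 1" "0 \<le> qtr (al!k)" "qtr (al!k) \<le> 1"
          using tr'[OF k] g(3) by auto
        show ?thesis
        proof (cases "qtr (al!k) = 0 \<and> qtr \<gamma> = 1")
          case False
          then have "qtr (al!k) = 1 \<or> qtr \<gamma> = 0" using tr'[OF k] g(3) by auto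
          then show ?thesis using Qb[OF k] Qd mle dT(2) t1 by auto
        next
          case True
          have "?Q \<gamma> \<noteq> ?Q (al!k)"
          proof
            assume "?Q \<gamma> = ?Q (al!k)"
            then have "qtr \<gamma> = 0" using B2[OF k _ g(1) _ li0] True by simp
            with True show False by simp
          qed
          then have "?Q (al!k) < ?Q \<gamma>" using mle by simp
          then have "?Q (al!k) + 1 \<le> ?Q \<gamma>" by (rule int_lt_lemma[OF Qint[OF kO] Qint[OF g(1)]])
          then show ?thesis using Qb[OF k] Qd dT(2) True by simp
        qed
      qed
      then show ?thesis using rank by (simp add: is_succ_min_def)
    qed
    show "attains_succ_min ?Q ?T n (map ?g al)"
      using SMk bT ind_bs lenb by (auto simp: attains_succ_min_def bs_def)
  qed
qed

end


theorem lemma3p7: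
  fixes p :: nat and a b :: int and Ord :: "quat set" and alpha beta :: "nat \<Rightarrow> quat"
  assumes "prime p"
    and "is_Bp p a b"
    and "is_order a b Ord"
    and "\<forall>i\<in>{1,2,3}. beta i \<in> gross_lattice Ord"
    and "lin_indep [beta 1, beta 2, beta 3]"
    and "\<forall>i\<in>{1,2,3}. alpha i \<in> Ord \<and> gross_map (alpha i) = beta i \<and> qtr (alpha i) \<in> {0, 1}"
  shows "attains_succ_min (qnorm a b) (gross_lattice Ord) 3 [beta 1, beta 2, beta 3] \<longleftrightarrow>
    (attains_succ_min (qnorm a b) Ord 4 [qone, alpha 1, alpha 2, alpha 3] \<and>
     (\<forall>i\<in>{1,2,3}. qtr (alpha i) = 0 \<longrightarrow>
        (\<forall>\<gamma>\<in>Ord. qnorm a b \<gamma> = qnorm a b (alpha i) \<and>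
                 lin_indep (qone # map alpha [1..<i] @ [\<gamma>]) \<longrightarrow> qtr \<gamma> = 0)))"
proof -
  obtain vs where vs: "length vs = 4" "lin_indep vs" "Ord = zspan vs"
    using assms(3) by (auto simp: is_order_def)
  have neg: "a < 0" "b < 0" using assms(2) by (auto simp: is_Bp_def ramified_infty_def)
  define al where "al = [alpha 1, alpha 2, alpha 3]"
  have mb: "map gross_map al = [beta 1, beta 2, beta 3]" using assms(6) by (simp add: al_def)
  have M: "attains_succ_min (qnorm a b) (gross_lattice Ord) 3 (map gross_map al) \<longleftrightarrow>
    (attains_succ_min (qnorm a b) Ord (Suc 3) (qone # al) \<and>
     (\<forall>i<3. qtr (al!i) = 0 \<longrightarrow> (\<forall>\<gamma>\<in>Ord. qnorm a b \<gamma> = qnorm a b (al!i) \<and>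
          lin_indep (qone # take i al @ [\<gamma>]) \<longrightarrow> qtr \<gamma> = 0)))"
    using assms(5,6) mb by (intro main[OF assms(3) vs neg]) (auto simp: al_def)
  have E1: "(\<forall>i<3. qtr (al!i) = 0 \<longrightarrow> (\<forall>\<gamma>\<in>Ord. qnorm a b \<gamma> = qnorm a b (al!i) \<and>
          lin_indep (qone # take i al @ [\<gamma>]) \<longrightarrow> qtr \<gamma> = 0)) \<longleftrightarrow>
     (\<forall>i\<in>{1,2,3}. qtr (alpha i) = 0 \<longrightarrow>
        (\<forall>\<gamma>\<in>Ord. qnorm a b \<gamma> = qnorm a b (alpha i) \<and>
                 lin_indep (qone # map alpha [1..<i] @ [\<gamma>]) \<longrightarrow> qtr \<gamma> = 0))"
  proof -
    have u: "(\<forall>i<(3::nat). P i) \<longleftrightarrow> P 0 \<and> P 1 \<and> P 2" for P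
      by (auto simp: less_Suc_eq numeral_eq_Suc)
    have r1: "[1..<1] = ([] :: nat list)" "[1..<2] = [1::nat]" "[1..<3] = [1::nat, 2]"
      "[Suc 0..<2] = [Suc 0]" "[Suc 0..<3] = [Suc 0, 2]"
      by (simp_all add: upt_rec)
    show ?thesis unfolding u by (simp add: al_def r1)
  qed
  show ?thesis using M E1 mb by (simp add: al_def)
qed

end
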